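(* Let $T:\mathcal P(\mathbb R^n)\to\mathcal P(\mathbb R^n)$ be given by $TA=\{y\in\mathbb R^n:\ \langle x,y\rangle\ge 1\ \forall x\in A\}$, and let $\mathcal C=\{TK:K\subseteq\mathbb R^n\}$. Every $K\in\mathcal C$ other than $\emptyset$ and $\mathbb R^n$ has a unique point closest to the origin. For $u\in S^{n-1}$ let $\mathcal C_u$ be the set of those $K\in\mathcal C\setminus\{\emptyset,\mathbb R^n\}$ whose closest point to the origin lies on the ray $\{\lambda u:\lambda>0\}$. Then for every $u\in S^{n-1}$ and every $K\in\mathcal C_u$ we have $TK\in\mathcal C_u$.
   Context: $\mathcal P(\mathbb R^n)$ is the power set of $\mathbb R^n$, $\langle\cdot,\cdot\rangle$ the standard inner product, and $S^{n-1}$ the Euclidean unit sphere. *)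

theory Defs
  imports "HOL-Analysis.Analysis"
begin

definition polT :: "'a::euclidean_space set \<Rightarrow> 'a set" where
  "polT A = {y. \<forall>x\<in>A. inner x y \<ge> 1}"

definition classC :: "'a::euclidean_space set set" where
  "classC = range polT"

definition classC_u :: "'a::euclidean_space \<Rightarrow> 'a set set" where
  "classC_u u = {K \<in> classC - {{}, UNIV}.
      \<exists>l::real. l > 0 \<and> closest_point K 0 = l *\<^sub>R u}"

end

theory Submission
  imports Defs
begin

lemma polT_eq: "polT A = (\<Inter>x\<in>A. {y. inner x y \<ge> 1})"
  unfolding polT_def by auto

lemma polT_closed: "closed (polT A)"
  unfolding polT_eq by (intro closed_INT) (simp add: closed_halfspace_ge)

lemma polT_convex: "convex (polT A)"
  unfolding polT_eq by (intro convex_INT) (simp add: convex_halfspace_ge)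

theorem lemma5p2:
  fixes u :: "'a::euclidean_space" and K :: "'a set"
  assumes "u \<in> sphere 0 1"
    and "K \<in> classC_u u"
  shows "polT K \<in> classC_u u"
proof -
  have nu: "norm u = 1" using assms(1) by simp
  obtain A where KA: "K = polT A" and Kne: "K \<noteq> {}" and KU: "K \<noteq> UNIV"
    using assms(2) unfolding classC_u_def classC_def by auto
  obtain l :: real where l0: "l > 0" and cp: "closest_point K 0 = l *\<^sub>R u"
    using assms(2) unfolding classC_u_def by auto
  have cK: "closed K" and vK: "convex K" using KA polT_closed polT_convex by auto
  define p where "p = l *\<^sub>R u"
  have pK: "p \<in> K" using closest_point_in_set[OF cK Kne, of 0] cp p_def by simp
  have pp: "inner p p = l^2" unfolding p_def using nu
    by (simp add: power2_eq_square inner_commute) (metis inner_commute norm_eq_1 mult.assoc)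
  have key: "inner y p \<ge> l^2" if "y \<in> K" for y
  proof -
    have "inner (0 - p) (y - p) \<le> 0"
      using closest_point_dot[OF vK cK that, of 0] cp p_def by simp
    hence "inner p p \<le> inner p y" by (simp add: inner_diff_right)
    thus ?thesis using pp by (simp add: inner_commute)
  qed
  define q where "q = (1/l) *\<^sub>R u"
  have qT: "q \<in> polT K"
  proof -
    have "inner y q \<ge> 1" if "y \<in> K" for y
    proof -
      have "inner y q = inner y p / l^2" unfolding q_def p_def using l0
        by (simp add: power2_eq_square)
      thus ?thesis using key[OF that] l0 by simp
    qed
    thus ?thesis unfolding polT_def by auto
  qed
  have TU: "polT K \<noteq> UNIV"
  proof
    assume "polT K = UNIV"
    hence "(0::'a) \<in> polT K" by simp
    thus False using pK unfolding polT_def by auto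
  qed
  have nq: "norm q = 1/l" unfolding q_def using nu l0 by simp
  have qmin: "\<forall>z\<in>polT K. dist 0 q \<le> dist 0 z"
  proof
    fix z assume "z \<in> polT K"
    hence "inner p z \<ge> 1" using pK unfolding polT_def by auto
    moreover have "inner p z \<le> norm p * norm z" by (rule norm_cauchy_schwarz)
    moreover have "norm p = l" unfolding p_def using nu l0 by simp
    ultimately have "1 \<le> l * norm z" by simp
    hence "1/l \<le> norm z" using l0 by (simp add: field_simps)
    thus "dist 0 q \<le> dist 0 z" using nq by simp
  qed
  have "q = closest_point (polT K) 0"
    by (rule closest_point_unique[OF polT_convex polT_closed qT qmin])
  moreover have "polT K \<in> classC" unfolding classC_def by simp
  moreover have "polT K \<noteq> {}" using qT by auto
  moreover have "1/l > 0" using l0 by simp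
  ultimately show ?thesis unfolding classC_u_def q_def using TU
    by (intro CollectI conjI) (auto intro!: exI[of _ "1/l"])
qed

end
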